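(* Let $q\ge 7$ and $s\in[1,7]$ be integers, $C$ a finite set with $|C|=2q+s$, and $M\in\mathcal M(6,q,C)$. Then: (1) $c_1=0$; (2) $c_l=0$ for all $l\ge 7$; (3) $c_2\ge 3s$; (4) $c_{3+}\le 2q-2s$; (5) $\sum_{i=3}^6 i\,c_i\le 6q-6s$; (6) $\operatorname{frq}(M)=2$; (7) $\operatorname{exc}(M)=7-s$; (8) $c_{4+}\le c_2-3s$; (9) for every two-element set $\{i,k\}\subseteq\{1,\dots,6\}$, $r(i,k)\le 8-s$.
   Context: $\mathcal M(6,q,C)$ is the set of $6\times q$ matrices $M$ with entries from $C$ such that each row has $q$ pairwise distinct entries, each column has $6$ pairwise distinct entries, and every pair of distinct colours of $C$ appears together in some row or some column of $M$. The frequency of a colour is the number of entries of $M$ equal to it; $\operatorname{frq}(M)$ is the minimum frequency over $C$. $C_l$ is the set of colours of frequency $l$, $c_l=|C_l|$; $C_{l+}$ is the set of colours of frequency at least $l$, $c_{l+}=|C_{l+}|$. The excess of a colour $\gamma$ of frequency $l$ is $\operatorname{exc}(\gamma)=l(6+q-l-1)-(|C|-1)$, and $\operatorname{exc}(M)$ is the minimum excess over $C$. For rows $i\ne k$, $r(i,k)$ is the number of colours of frequency $2$ appearing in both row $i$ and row $k$. *)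

theory Defs
  imports Main
begin

text \<open>A p x q matrix with entries in colour type 'c is a function M :: nat => nat => 'c,
  rows indexed by {1..p}, columns by {1..q}.\<close>

definition row_set :: "(nat \<Rightarrow> nat \<Rightarrow> 'c) \<Rightarrow> nat \<Rightarrow> nat \<Rightarrow> 'c set" where
  "row_set M q i = (\<lambda>j. M i j) ` {1..q}"

definition col_set :: "(nat \<Rightarrow> nat \<Rightarrow> 'c) \<Rightarrow> nat \<Rightarrow> nat \<Rightarrow> 'c set" where
  "col_set M p j = (\<lambda>i. M i j) ` {1..p}"

definition in_M :: "nat \<Rightarrow> nat \<Rightarrow> 'c set \<Rightarrow> (nat \<Rightarrow> nat \<Rightarrow> 'c) \<Rightarrow> bool" where
  "in_M p q C M \<longleftrightarrow>
     (\<forall>i\<in>{1..p}. \<forall>j\<in>{1..q}. M i j \<in> C) \<and>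
     (\<forall>i\<in>{1..p}. inj_on (\<lambda>j. M i j) {1..q}) \<and>
     (\<forall>j\<in>{1..q}. inj_on (\<lambda>i. M i j) {1..p}) \<and>
     (\<forall>a\<in>C. \<forall>b\<in>C. a \<noteq> b \<longrightarrow>
        (\<exists>i\<in>{1..p}. a \<in> row_set M q i \<and> b \<in> row_set M q i) \<or>
        (\<exists>j\<in>{1..q}. a \<in> col_set M p j \<and> b \<in> col_set M p j))"

definition freq :: "nat \<Rightarrow> nat \<Rightarrow> (nat \<Rightarrow> nat \<Rightarrow> 'c) \<Rightarrow> 'c \<Rightarrow> nat" where
  "freq p q M g = card {(i, j). i \<in> {1..p} \<and> j \<in> {1..q} \<and> M i j = g}"

definition frq :: "nat \<Rightarrow> nat \<Rightarrow> 'c set \<Rightarrow> (nat \<Rightarrow> nat \<Rightarrow> 'c) \<Rightarrow> nat" where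
  "frq p q C M = Min (freq p q M ` C)"

definition cnt :: "nat \<Rightarrow> nat \<Rightarrow> 'c set \<Rightarrow> (nat \<Rightarrow> nat \<Rightarrow> 'c) \<Rightarrow> nat \<Rightarrow> nat" where
  "cnt p q C M l = card {g \<in> C. freq p q M g = l}"

definition cnt_ge :: "nat \<Rightarrow> nat \<Rightarrow> 'c set \<Rightarrow> (nat \<Rightarrow> nat \<Rightarrow> 'c) \<Rightarrow> nat \<Rightarrow> nat" where
  "cnt_ge p q C M l = card {g \<in> C. freq p q M g \<ge> l}"

definition exc_col :: "nat \<Rightarrow> nat \<Rightarrow> 'c set \<Rightarrow> (nat \<Rightarrow> nat \<Rightarrow> 'c) \<Rightarrow> 'c \<Rightarrow> int" where
  "exc_col p q C M g = (let l = int (freq p q M g) in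
      l * (int p + int q - l - 1) - (int (card C) - 1))"

definition exc :: "nat \<Rightarrow> nat \<Rightarrow> 'c set \<Rightarrow> (nat \<Rightarrow> nat \<Rightarrow> 'c) \<Rightarrow> int" where
  "exc p q C M = Min (exc_col p q C M ` C)"

definition rr :: "nat \<Rightarrow> nat \<Rightarrow> 'c set \<Rightarrow> (nat \<Rightarrow> nat \<Rightarrow> 'c) \<Rightarrow> nat \<Rightarrow> nat \<Rightarrow> nat" where
  "rr p q C M i k = card {g \<in> C. freq p q M g = 2 \<and> g \<in> row_set M q i \<and> g \<in> row_set M q k}"

end

theory Submission
  imports Defs
begin

definition occ :: "nat \<Rightarrow> nat \<Rightarrow> (nat \<Rightarrow> nat \<Rightarrow> 'c) \<Rightarrow> 'c \<Rightarrow> (nat \<times> nat) set" where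
  "occ p q M g = {(i, j). i \<in> {1..p} \<and> j \<in> {1..q} \<and> M i j = g}"

lemma occ_sub: "occ p q M g \<subseteq> {1..p} \<times> {1..q}"
  unfolding occ_def by auto

lemma occ_fin: "finite (occ p q M g)"
  by (rule finite_subset[OF occ_sub]) simp

lemma freq_occ: "freq p q M g = card (occ p q M g)"
  unfolding freq_def occ_def by simp

lemma inj_fst:
  assumes "in_M p q C M" shows "inj_on fst (occ p q M g)"
proof (rule inj_onI)
  fix x y assume x: "x \<in> occ p q M g" and y: "y \<in> occ p q M g" and e: "fst x = fst y"
  obtain i j where xi: "x = (i, j)" by (cases x)
  obtain i' j' where yi: "y = (i', j')" by (cases y)
  have h: "i \<in> {1..p}" "j \<in> {1..q}" "j' \<in> {1..q}" "M i j = g" "M i j' = g" "i' = i"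
    using x y e xi yi unfolding occ_def by auto
  have "inj_on (\<lambda>j. M i j) {1..q}" using assms h(1) unfolding in_M_def by blast
  then have "j = j'" using h unfolding inj_on_def by metis
  then show "x = y" using xi yi h by simp
qed

lemma inj_snd:
  assumes "in_M p q C M" shows "inj_on snd (occ p q M g)"
proof (rule inj_onI)
  fix x y assume x: "x \<in> occ p q M g" and y: "y \<in> occ p q M g" and e: "snd x = snd y"
  obtain i j where xi: "x = (i, j)" by (cases x)
  obtain i' j' where yi: "y = (i', j')" by (cases y)
  have h: "i \<in> {1..p}" "i' \<in> {1..p}" "j \<in> {1..q}" "M i j = g" "M i' j = g" "j' = j"
    using x y e xi yi unfolding occ_def by auto
  have "inj_on (\<lambda>i. M i j) {1..p}" using assms h(3) unfolding in_M_def by blast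
  then have "i = i'" using h unfolding inj_on_def by metis
  then show "x = y" using xi yi h by simp
qed

lemma card_fst: "in_M p q C M \<Longrightarrow> card (fst ` occ p q M g) = freq p q M g"
  by (simp add: card_image freq_occ inj_fst)

lemma card_snd: "in_M p q C M \<Longrightarrow> card (snd ` occ p q M g) = freq p q M g"
  by (simp add: card_image freq_occ inj_snd)

lemma freq_le: "in_M p q C M \<Longrightarrow> freq p q M g \<le> p"
proof -
  assume a: "in_M p q C M"
  have "fst ` occ p q M g \<subseteq> {1..p}" using occ_sub by fastforce
  then have "card (fst ` occ p q M g) \<le> p" using card_mono[of "{1..p}"] by fastforce
  then show ?thesis using card_fst[OF a] by simp
qed

lemma sum_freq:
  assumes "in_M p q C M" "finite C"
  shows "(\<Sum>g\<in>C. freq p q M g) = p * q"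
proof -
  let ?P = "{1..p} \<times> {1..q}"
  let ?f = "\<lambda>x. M (fst x) (snd x)"
  have im: "?f ` ?P \<subseteq> C" using assms(1) unfolding in_M_def by auto
  have "(\<Sum>y\<in>C. \<Sum>x\<in>{x. x \<in> ?P \<and> ?f x = y}. (1::nat)) = (\<Sum>x\<in>?P. 1)"
    by (rule sum.group[OF _ assms(2) im]) auto
  moreover have "\<And>y. {x. x \<in> ?P \<and> ?f x = y} = occ p q M y" unfolding occ_def by auto
  ultimately show ?thesis by (simp add: freq_occ)
qed

definition cross :: "nat \<Rightarrow> nat \<Rightarrow> (nat \<Rightarrow> nat \<Rightarrow> 'c) \<Rightarrow> 'c \<Rightarrow> (nat \<times> nat) set" where
  "cross p q M g = (fst ` occ p q M g \<times> {1..q}) \<union> ({1..p} \<times> snd ` occ p q M g)"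

lemma cross_card:
  assumes "in_M p q C M"
  shows "card (cross p q M g) + freq p q M g * freq p q M g = freq p q M g * q + p * freq p q M g"
proof -
  let ?R = "fst ` occ p q M g" and ?K = "snd ` occ p q M g"
  have R: "?R \<subseteq> {1..p}" and K: "?K \<subseteq> {1..q}" using occ_sub by fastforce+
  have fR: "finite ?R" and fK: "finite ?K" by (simp_all add: occ_fin)
  have int: "(?R \<times> {1..q}) \<inter> ({1..p} \<times> ?K) = ?R \<times> ?K" using R K by auto
  have "card (cross p q M g) + card ((?R \<times> {1..q}) \<inter> ({1..p} \<times> ?K)) = card (?R \<times> {1..q}) + card ({1..p} \<times> ?K)"
    unfolding cross_def using card_Un_Int[of "?R \<times> {1..q}" "{1..p} \<times> ?K"] fR fK by simp
  then show ?thesis using int card_fst[OF assms] card_snd[OF assms]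
    by (simp add: card_cartesian_product)
qed

lemma occ_cross: "occ p q M g \<subseteq> cross p q M g"
proof
  fix x assume h: "x \<in> occ p q M g"
  have "x \<in> {1..p} \<times> {1..q}" using subsetD[OF occ_sub h] .
  then have "snd x \<in> {1..q}" by (simp add: mem_Times_iff)
  moreover have "fst x \<in> fst ` occ p q M g" using h by (rule imageI)
  ultimately have "x \<in> fst ` occ p q M g \<times> {1..q}" by (simp add: mem_Times_iff)
  then show "x \<in> cross p q M g" unfolding cross_def by (rule UnI1)
qed

lemma cover:
  assumes "in_M p q C M" "g \<in> C"
  shows "C - {g} \<subseteq> (\<lambda>x. M (fst x) (snd x)) ` (cross p q M g - occ p q M g)"
proof
  fix b assume b: "b \<in> C - {g}"
  then have "(\<exists>i\<in>{1..p}. g \<in> row_set M q i \<and> b \<in> row_set M q i) \<or>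
        (\<exists>j\<in>{1..q}. g \<in> col_set M p j \<and> b \<in> col_set M p j)"
    using assms unfolding in_M_def by blast
  then show "b \<in> (\<lambda>x. M (fst x) (snd x)) ` (cross p q M g - occ p q M g)"
  proof
    assume "\<exists>i\<in>{1..p}. g \<in> row_set M q i \<and> b \<in> row_set M q i"
    then obtain i j j' where "i \<in> {1..p}" "j \<in> {1..q}" "j' \<in> {1..q}" "M i j = g" "M i j' = b"
      unfolding row_set_def by auto
    then have "(i, j') \<in> cross p q M g - occ p q M g" "M i j' = b"
      unfolding cross_def occ_def using b by (auto simp: image_iff)
    then show ?thesis by force
  next
    assume "\<exists>j\<in>{1..q}. g \<in> col_set M p j \<and> b \<in> col_set M p j"
    then obtain i i' j where "i \<in> {1..p}" "j \<in> {1..q}" "i' \<in> {1..p}" "M i j = g" "M i' j = b"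
      unfolding col_set_def by auto
    then have "(i', j) \<in> cross p q M g - occ p q M g" "M i' j = b"
      unfolding cross_def occ_def using b by (auto simp: image_iff)
    then show ?thesis by force
  qed
qed

lemma cover_card:
  assumes "in_M p q C M" "g \<in> C" "finite C"
  shows "card C - 1 + freq p q M g \<le> card (cross p q M g)"
proof -
  have fc: "finite (cross p q M g)" unfolding cross_def by (simp add: occ_fin)
  have "card (C - {g}) \<le> card ((\<lambda>x. M (fst x) (snd x)) ` (cross p q M g - occ p q M g))"
    by (rule card_mono[OF _ cover[OF assms(1,2)]]) (use fc in auto)
  also have "\<dots> \<le> card (cross p q M g - occ p q M g)" by (rule card_image_le) (use fc in auto)
  also have "\<dots> = card (cross p q M g) - freq p q M g"
    by (simp add: card_Diff_subset occ_cross occ_fin freq_occ)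
  finally show ?thesis using assms card_mono[OF fc occ_cross] freq_occ[of p q M g] by simp
qed


lemma group_freq:
  assumes "finite C" "finite T" "\<forall>g\<in>C. freq p q M g \<in> T"
  shows "(\<Sum>g\<in>C. h (freq p q M g)) = (\<Sum>l\<in>T. h l * cnt p q C M l)"
proof -
  have "(\<Sum>l\<in>T. \<Sum>x\<in>{x. x \<in> C \<and> freq p q M x = l}. h (freq p q M x)) = (\<Sum>g\<in>C. h (freq p q M g))"
    by (rule sum.group) (use assms in auto)
  moreover have "\<And>l. (\<Sum>x\<in>{x. x \<in> C \<and> freq p q M x = l}. h (freq p q M x)) = h l * cnt p q C M l"
    unfolding cnt_def by (simp add: mult.commute)
  ultimately show ?thesis by (metis (no_types, lifting) sum.cong)
qed

lemma card_filter_sum: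
  assumes "finite C"
  shows "card {g \<in> C. P g} = (\<Sum>g\<in>C. if P g then 1 else 0)"
  using sum.inter_filter[OF assms, of "\<lambda>_. (1::nat)" P] by simp

lemma freq_range:
  assumes "q \<ge> 7" "1 \<le> s" "finite C" "card C = 2 * q + s" "in_M 6 q C M" "g \<in> C"
  shows "freq 6 q M g \<in> {2,3,4,5,6}"
proof -
  have a: "card C - 1 + freq 6 q M g \<le> card (cross 6 q M g)" by (rule cover_card) (use assms in auto)
  have b: "card (cross 6 q M g) + freq 6 q M g * freq 6 q M g = freq 6 q M g * q + 6 * freq 6 q M g"
    by (rule cross_card) (use assms in auto)
  have c: "freq 6 q M g \<le> 6" using freq_le assms by metis
  have "freq 6 q M g \<noteq> 0"
  proof
    assume z: "freq 6 q M g = 0"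
    show False using a b assms(1,4) by (simp add: z)
  qed
  moreover have "freq 6 q M g \<noteq> 1"
  proof
    assume z: "freq 6 q M g = 1"
    show False using a b assms(1,4) by (simp add: z)
  qed
  ultimately show ?thesis using c by auto
qed


lemma rr_bound:
  assumes "q \<ge> 7" "1 \<le> s" "s \<le> 7" "finite C" "card C = 2 * q + s" "in_M 6 q C M"
    and ik: "i \<in> {1..6}" "k \<in> {1..6}" "i \<noteq> k"
  shows "int (rr 6 q C M i k) \<le> 8 - int s"
proof (cases "rr 6 q C M i k = 0")
  case True then show ?thesis using assms by simp
next
  case False
  define G where "G = {g \<in> C. freq 6 q M g = 2 \<and> g \<in> row_set M q i \<and> g \<in> row_set M q k}"
  have rrG: "rr 6 q C M i k = card G" unfolding rr_def G_def by simp
  have fG: "finite G" unfolding G_def using assms by simp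
  obtain \<gamma> where \<gamma>: "\<gamma> \<in> G" using False rrG by (metis all_not_in_conv card.empty)
  have \<gamma>C: "\<gamma> \<in> C" and f2: "freq 6 q M \<gamma> = 2" using \<gamma> unfolding G_def by auto
  have inj: "\<And>a j j'. a \<in> {1..6} \<Longrightarrow> j \<in> {1..q} \<Longrightarrow> j' \<in> {1..q} \<Longrightarrow> M a j = M a j' \<Longrightarrow> j = j'"
    using assms(6) unfolding in_M_def inj_on_def by blast
  let ?f = "\<lambda>x. M (fst x) (snd x)"
  let ?O = "occ 6 q M \<gamma>"
  let ?X = "cross 6 q M \<gamma>"
  have iO: "i \<in> fst ` ?O"
  proof -
    obtain j where j: "j \<in> {1..q}" "M i j = \<gamma>" using \<gamma> unfolding G_def row_set_def by auto
    then have "(i, j) \<in> ?O" using ik unfolding occ_def by auto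
    then have "fst (i, j) \<in> fst ` ?O" by (rule imageI)
    then show ?thesis by simp
  qed
  have kO: "k \<in> fst ` ?O"
  proof -
    obtain j where j: "j \<in> {1..q}" "M k j = \<gamma>" using \<gamma> unfolding G_def row_set_def by auto
    then have "(k, j) \<in> ?O" using ik unfolding occ_def by auto
    then have "fst (k, j) \<in> fst ` ?O" by (rule imageI)
    then show ?thesis by simp
  qed
  have cX: "card ?X = 2 * q + 8" using cross_card[OF assms(6), of \<gamma>] f2 by simp
  have fX: "finite ?X" unfolding cross_def by (simp add: occ_fin)
  define J where "J = {j \<in> {1..q}. M k j \<in> G - {\<gamma>}}"
  define D where "D = (\<lambda>j. (k, j)) ` J"
  have cD: "card D = card (G - {\<gamma>})"
  proof -
    have "card D = card J" unfolding D_def by (rule card_image) (auto simp: inj_on_def)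
    also have "card J = card (M k ` J)"
      by (rule card_image[symmetric]) (use inj ik in \<open>auto simp: inj_on_def J_def\<close>)
    also have "M k ` J = G - {\<gamma>}"
    proof
      show "M k ` J \<subseteq> G - {\<gamma>}" unfolding J_def by auto
      show "G - {\<gamma>} \<subseteq> M k ` J"
      proof
        fix d assume d: "d \<in> G - {\<gamma>}"
        then obtain j where "j \<in> {1..q}" "M k j = d" unfolding G_def row_set_def by auto
        then show "d \<in> M k ` J" using d unfolding J_def by auto
      qed
    qed
    finally show ?thesis .
  qed
  have DY: "D \<subseteq> ?X - ?O"
  proof
    fix x assume "x \<in> D"
    then obtain j where x: "x = (k, j)" "j \<in> {1..q}" "M k j \<in> G - {\<gamma>}" unfolding D_def J_def by auto
    have "x \<in> ?X" unfolding cross_def using kO x by auto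
    moreover have "x \<notin> ?O" unfolding occ_def using x by auto
    ultimately show "x \<in> ?X - ?O" by blast
  qed
  have cov: "C - {\<gamma>} \<subseteq> ?f ` (?X - ?O - D)"
  proof
    fix b assume b: "b \<in> C - {\<gamma>}"
    then obtain x where x: "x \<in> ?X - ?O" "b = ?f x" using cover[OF assms(6) \<gamma>C] by blast
    show "b \<in> ?f ` (?X - ?O - D)"
    proof (cases "x \<in> D")
      case False then show ?thesis using x by blast
    next
      case True
      then have "b \<in> G - {\<gamma>}" using x unfolding D_def J_def by auto
      then obtain j' where j': "j' \<in> {1..q}" "M i j' = b" unfolding G_def row_set_def by auto
      have "(i, j') \<in> ?X" unfolding cross_def using iO j' by auto
      moreover have "(i, j') \<notin> ?O" using j' b unfolding occ_def by auto
      moreover have "(i, j') \<notin> D" unfolding D_def using ik by auto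
      ultimately show ?thesis using j' by force
    qed
  qed
  have e1: "card (C - {\<gamma>}) \<le> card (?f ` (?X - ?O - D))"
    by (rule card_mono[OF _ cov]) (use fX in auto)
  have e2: "card (?f ` (?X - ?O - D)) \<le> card (?X - ?O - D)" by (rule card_image_le) (use fX in auto)
  have e3: "card (?X - ?O - D) = card (?X - ?O) - card D"
    by (rule card_Diff_subset) (use DY fX finite_subset in auto)
  have e4: "card (?X - ?O) = card ?X - 2"
    by (simp add: card_Diff_subset occ_cross occ_fin freq_occ[symmetric] f2)
  have e5: "card (C - {\<gamma>}) = card C - 1" using \<gamma>C assms(4) by simp
  have e6: "card (G - {\<gamma>}) = card G - 1" using \<gamma> fG by simp
  have "card G \<noteq> 0" using \<gamma> fG by auto
  then show ?thesis using rrG e1 e2 e3 e4 e5 e6 cX cD assms(1,2,3,5) by linarith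
qed


theorem claim1:
  fixes q s :: nat and C :: "'c set" and M :: "nat \<Rightarrow> nat \<Rightarrow> 'c"
  assumes "q \<ge> 7" and "1 \<le> s" and "s \<le> 7"
    and "finite C" and "card C = 2 * q + s"
    and "in_M 6 q C M"
  shows "cnt 6 q C M 1 = 0
    \<and> (\<forall>l\<ge>7. cnt 6 q C M l = 0)
    \<and> cnt 6 q C M 2 \<ge> 3 * s
    \<and> int (cnt_ge 6 q C M 3) \<le> 2 * int q - 2 * int s
    \<and> int (\<Sum>i=3..6. i * cnt 6 q C M i) \<le> 6 * int q - 6 * int s
    \<and> frq 6 q C M = 2
    \<and> exc 6 q C M = 7 - int s
    \<and> int (cnt_ge 6 q C M 4) \<le> int (cnt 6 q C M 2) - 3 * int s
    \<and> (\<forall>i\<in>{1..6}. \<forall>k\<in>{1..6}. i \<noteq> k \<longrightarrow> int (rr 6 q C M i k) \<le> 8 - int s)"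
proof -
  let ?T = "{2,3,4,5,6::nat}"
  have fr: "\<forall>g\<in>C. freq 6 q M g \<in> ?T" using freq_range[OF assms(1,2,4,5,6)] by (intro ballI)
  note gf = group_freq[OF assms(4) _ fr, simplified]
  have S1: "6 * q = 2 * cnt 6 q C M 2 + 3 * cnt 6 q C M 3 + 4 * cnt 6 q C M 4 + 5 * cnt 6 q C M 5 + 6 * cnt 6 q C M 6"
    using gf[of "\<lambda>x. x"] sum_freq[OF assms(6,4)] by simp
  have S0: "card C = cnt 6 q C M 2 + cnt 6 q C M 3 + cnt 6 q C M 4 + cnt 6 q C M 5 + cnt 6 q C M 6"
    using gf[of "\<lambda>x. 1"] by simp
  have G3: "cnt_ge 6 q C M 3 = cnt 6 q C M 3 + cnt 6 q C M 4 + cnt 6 q C M 5 + cnt 6 q C M 6"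
    unfolding cnt_ge_def card_filter_sum[OF assms(4)] using gf[of "\<lambda>x. if 3 \<le> x then 1 else 0"] by simp
  have G4: "cnt_ge 6 q C M 4 = cnt 6 q C M 4 + cnt 6 q C M 5 + cnt 6 q C M 6"
    unfolding cnt_ge_def card_filter_sum[OF assms(4)] using gf[of "\<lambda>x. if 4 \<le> x then 1 else 0"] by simp
  have Z: "cnt 6 q C M l = 0" if "l \<notin> ?T" for l
  proof -
    have "{g \<in> C. freq 6 q M g = l} = {}" using fr that by auto
    then show ?thesis unfolding cnt_def by (simp only: card.empty)
  qed
  have sm: "(\<Sum>i=3..6. i * cnt 6 q C M i) = 3 * cnt 6 q C M 3 + 4 * cnt 6 q C M 4 + 5 * cnt 6 q C M 5 + 6 * cnt 6 q C M 6"
  proof -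
    have "{3..6::nat} = {3,4,5,6}" by auto
    then show ?thesis by simp
  qed
  have c2: "cnt 6 q C M 2 \<ge> 3 * s" using S0 S1 assms by linarith
  then have "cnt 6 q C M 2 \<noteq> 0" using assms(2) by simp
  then have "{g \<in> C. freq 6 q M g = 2} \<noteq> {}" unfolding cnt_def by (metis card.empty)
  then obtain g2 where g2: "g2 \<in> C" "freq 6 q M g2 = 2" by blast
  have frq: "frq 6 q C M = 2" unfolding frq_def
    by (rule Min_eqI) (use assms(4) fr g2 in \<open>auto simp: image_iff\<close>)
  have excs: "exc_col 6 q C M g \<ge> 7 - int s" if "g \<in> C" for g
    using fr that assms unfolding exc_col_def Let_def by auto
  have exc: "exc 6 q C M = 7 - int s" unfolding exc_def
  proof (rule Min_eqI)
    show "finite (exc_col 6 q C M ` C)" using assms(4) by simp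
    show "\<And>y. y \<in> exc_col 6 q C M ` C \<Longrightarrow> 7 - int s \<le> y" using excs by auto
    have "exc_col 6 q C M g2 = 7 - int s" using g2 assms unfolding exc_col_def Let_def by simp
    then show "7 - int s \<in> exc_col 6 q C M ` C" using g2 by force
  qed
  show ?thesis
    using Z[of 1] Z c2 G3 G4 sm frq exc S0 S1 assms rr_bound[OF assms(1-6)]
    by auto
qed

end
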